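(* Let $k,n\in\mathbb N$. There do not exist uniformly bounded families $\mathcal V_1,\dots,\mathcal V_n$ of subsets of $(k\mathbb Z)^n$, each $2k$-disjoint, such that $\bigcup_{i=1}^n\mathcal V_i$ covers $(k\mathbb Z)^n$.
   Context: $k\mathbb Z=\{kl:l\in\mathbb Z\}$, and $(k\mathbb Z)^n\subset\mathbb Z^n$ carries the sup-metric $d((x_1,\dots,x_n),(y_1,\dots,y_n))=\max_i|x_i-y_i|$. A family $\mathcal A$ of subsets is uniformly bounded if there is $C>0$ with $\operatorname{diam}A\le C$ for all $A\in\mathcal A$; it is $r$-disjoint if $d(A_1,A_2)\ge r$ for all distinct $A_1,A_2\in\mathcal A$. *)

theory Defs
  imports Complex_Main
begin

text \<open>Points of \<open>\<int>^n\<close> are represented as functions \<open>nat \<Rightarrow> int\<close> that vanish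
  outside the coordinates \<open>0..<n\<close>.\<close>

definition kZn :: "int \<Rightarrow> nat \<Rightarrow> (nat \<Rightarrow> int) set" where
  "kZn k n = {x. (\<forall>i<n. k dvd x i) \<and> (\<forall>i\<ge>n. x i = 0)}"

definition supdist :: "nat \<Rightarrow> (nat \<Rightarrow> int) \<Rightarrow> (nat \<Rightarrow> int) \<Rightarrow> int" where
  "supdist n x y = Max (insert 0 ((\<lambda>i. \<bar>x i - y i\<bar>) ` {..<n}))"

definition unif_bounded :: "nat \<Rightarrow> (nat \<Rightarrow> int) set set \<Rightarrow> bool" where
  "unif_bounded n \<V> \<longleftrightarrow> (\<exists>C::real. C > 0 \<and>
      (\<forall>A\<in>\<V>. \<forall>x\<in>A. \<forall>y\<in>A. real_of_int (supdist n x y) \<le> C))"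

definition r_disjoint :: "nat \<Rightarrow> int \<Rightarrow> (nat \<Rightarrow> int) set set \<Rightarrow> bool" where
  "r_disjoint n r \<V> \<longleftrightarrow> (\<forall>A1\<in>\<V>. \<forall>A2\<in>\<V>. A1 \<noteq> A2 \<longrightarrow>
      (\<forall>x\<in>A1. \<forall>y\<in>A2. supdist n x y \<ge> r))"

end

theory Submission
  imports Defs "HOL-Analysis.Analysis"
begin

lemma supdist_le:
  assumes "0 \<le> B" "\<forall>i<n. \<bar>x i - y i\<bar> \<le> B"
  shows "supdist n x y \<le> B"
  using assms unfolding supdist_def by (auto simp: Max_le_iff)

lemma supdist_ge:
  assumes "i < n"
  shows "\<bar>x i - y i\<bar> \<le> supdist n x y"
  using assms unfolding supdist_def by (intro Max_ge) auto

lemma hex_core: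
  fixes p n :: nat and col :: "(nat \<Rightarrow> nat) \<Rightarrow> nat" and sg :: "(nat \<Rightarrow> nat) \<Rightarrow> bool"
  assumes p: "0 < p"
  and col: "\<And>x. (\<forall>j. x j \<le> p) \<Longrightarrow> col x < n"
  and low: "\<And>x. (\<forall>j. x j \<le> p) \<Longrightarrow> x (col x) \<le> 1 \<Longrightarrow> sg x"
  and high: "\<And>x. (\<forall>j. x j \<le> p) \<Longrightarrow> p \<le> x (col x) + 1 \<Longrightarrow> \<not> sg x"
  and adj: "\<And>x y. (\<forall>j. x j \<le> p) \<Longrightarrow> (\<forall>j. y j \<le> p) \<Longrightarrow>
      (\<forall>j<n. x j \<le> y j + 1 \<and> y j \<le> x j + 1) \<Longrightarrow> col x = col y \<Longrightarrow> sg x = sg y"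
  shows False
proof -
  define lab where "lab x j = (if x j = p \<or> (col x = j \<and> \<not> sg x) then 1 else (0::nat))" for x j
  have "odd (card {s. ksimplex p n s \<and> (reduced n \<circ> lab) ` s = {..n}})"
  proof (rule kuhn_combinatorial)
    show "\<forall>x j. (\<forall>j. x j \<le> p) \<and> j < n \<and> x j = 0 \<longrightarrow> lab x j = 0"
      using p low unfolding lab_def by fastforce
    show "\<forall>x j. (\<forall>j. x j \<le> p) \<and> j < n \<and> x j = p \<longrightarrow> lab x j = 1"
      unfolding lab_def by auto
  qed (rule p)
  then have "{s. ksimplex p n s \<and> (reduced n \<circ> lab) ` s = {..n}} \<noteq> {}"
    by (rule odd_card_imp_not_empty)
  then obtain s b u where ks: "kuhn_simplex p n b u s" and rl: "(reduced n \<circ> lab) ` s = {..n}"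
    by (auto elim: ksimplex.cases)
  have box: "\<forall>j. x j \<le> p" if "x \<in> s" for x
    using kuhn_simplex.s_le_p[OF ks that] by auto
  have close: "\<forall>j<n. x j \<le> y j + 1 \<and> y j \<le> x j + 1" if "x \<in> s" "y \<in> s" for x y
  proof (intro allI impI)
    fix j assume "j < n"
    have "b j \<le> x j" "x j \<le> Suc (b j)" "b j \<le> y j" "y j \<le> Suc (b j)"
      using kuhn_simplex.base_le[OF ks that(1)] kuhn_simplex.le_Suc_base[OF ks that(1)]
        kuhn_simplex.base_le[OF ks that(2)] kuhn_simplex.le_Suc_base[OF ks that(2)]
      by auto
    then show "x j \<le> y j + 1 \<and> y j \<le> x j + 1" by linarith
  qed
  obtain v where v: "v \<in> s" "reduced n (lab v) = n"
    using rl by (metis (no_types, lifting) atMost_iff comp_apply imageE order_refl)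
  have lv: "\<forall>i<n. lab v i = 0"
    using reduced_labelling(2)[of n "lab v"] v by simp
  define j where "j = col v"
  have jn: "j < n" using col box v unfolding j_def by blast
  have sv: "sg v" and vj: "v j \<noteq> p"
    using lv jn unfolding lab_def j_def by (auto split: if_splits)
  have vj2: "v j + 1 < p" using high[OF box[OF v(1)]] sv unfolding j_def by force
  obtain u where u: "u \<in> s" "reduced n (lab u) = j"
    using rl jn by (metis (no_types, lifting) atMost_iff comp_apply imageE less_imp_le)
  have "lab u j \<noteq> 0"
    using reduced_labelling(3)[of n "lab u"] u jn by simp
  moreover have "u j \<noteq> p" using close[OF u(1) v(1)] jn vj2 by force
  ultimately have cu: "col u = j" and su: "\<not> sg u"
    unfolding lab_def by (auto split: if_splits)
  have "sg u = sg v"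
    using adj[OF box[OF u(1)] box[OF v(1)] close[OF u(1) v(1)]] cu j_def by simp
  then show False using su sv by simp
qed


theorem lemma3:
  fixes k n :: nat
  assumes "k \<ge> 1" and "n \<ge> 1"
  shows "\<not> (\<exists>\<V> :: nat \<Rightarrow> (nat \<Rightarrow> int) set set.
            (\<forall>i\<in>{1..n}. (\<forall>A\<in>\<V> i. A \<subseteq> kZn (int k) n)
                         \<and> unif_bounded n (\<V> i)
                         \<and> r_disjoint n (2 * int k) (\<V> i))
          \<and> kZn (int k) n \<subseteq> (\<Union>i\<in>{1..n}. \<Union>(\<V> i)))"
proof
  assume "\<exists>\<V> :: nat \<Rightarrow> (nat \<Rightarrow> int) set set.
            (\<forall>i\<in>{1..n}. (\<forall>A\<in>\<V> i. A \<subseteq> kZn (int k) n)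
                         \<and> unif_bounded n (\<V> i)
                         \<and> r_disjoint n (2 * int k) (\<V> i))
          \<and> kZn (int k) n \<subseteq> (\<Union>i\<in>{1..n}. \<Union>(\<V> i))"
  then obtain V :: "nat \<Rightarrow> (nat \<Rightarrow> int) set set" where
    V: "(\<forall>i\<in>{1..n}. (\<forall>A\<in>V i. A \<subseteq> kZn (int k) n)
                         \<and> unif_bounded n (V i)
                         \<and> r_disjoint n (2 * int k) (V i))
          \<and> kZn (int k) n \<subseteq> (\<Union>i\<in>{1..n}. \<Union>(V i))"
    by (rule exE)
  have ub: "\<And>i. i \<in> {1..n} \<Longrightarrow> unif_bounded n (V i)"
    and rd: "\<And>i. i \<in> {1..n} \<Longrightarrow> r_disjoint n (2 * int k) (V i)"
    and cov: "kZn (int k) n \<subseteq> (\<Union>i\<in>{1..n}. \<Union>(V i))"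
    using V by simp_all
  have "\<forall>i\<in>{1..n}. \<exists>C::real. C > 0 \<and> (\<forall>A\<in>V i. \<forall>x\<in>A. \<forall>y\<in>A. real_of_int (supdist n x y) \<le> C)"
    using ub unfolding unif_bounded_def by blast
  then obtain Cf where Cf: "\<And>i. i \<in> {1..n} \<Longrightarrow> Cf i > 0 \<and>
      (\<forall>A\<in>V i. \<forall>x\<in>A. \<forall>y\<in>A. real_of_int (supdist n x y) \<le> Cf i)"
    by metis
  define C where "C = (\<Sum>i\<in>{1..n}. Cf i)"
  have CfC: "Cf i \<le> C" if "i \<in> {1..n}" for i
    unfolding C_def using Cf that by (intro member_le_sum) (auto simp: less_imp_le)
  have Cpos: "0 \<le> C" unfolding C_def using Cf by (intro sum_nonneg) (auto simp: less_imp_le)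
  define p where "p = nat \<lceil>C\<rceil> + 3"
  define \<phi> where "\<phi> x = (\<lambda>i. if i < n then int k * int (x i) else 0)" for x :: "nat \<Rightarrow> nat"
  have phik: "\<phi> x \<in> kZn (int k) n" for x
    unfolding kZn_def \<phi>_def by auto
  have excol: "\<exists>i. i < n \<and> \<phi> x \<in> \<Union>(V (Suc i))" for x
  proof -
    obtain i where "i \<in> {1..n}" "\<phi> x \<in> \<Union>(V i)" using cov phik[of x] by blast
    then show ?thesis by (intro exI[of _ "i - 1"]) auto
  qed
  define col where "col x = (LEAST i. i < n \<and> \<phi> x \<in> \<Union>(V (Suc i)))" for x
  have colp: "col x < n \<and> \<phi> x \<in> \<Union>(V (Suc (col x)))" for x
    unfolding col_def using excol[of x] by (metis (mono_tags, lifting) LeastI_ex)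
  define A where "A x = (SOME B. B \<in> V (Suc (col x)) \<and> \<phi> x \<in> B)" for x
  have Ap: "A x \<in> V (Suc (col x)) \<and> \<phi> x \<in> A x" for x
    unfolding A_def using colp[of x] by (metis (mono_tags, lifting) UnionE someI_ex)
  define sg where "sg x = (\<exists>y\<in>A x. y (col x) \<le> int k)" for x
  show False
  proof (rule hex_core[of p col n sg])
    show "0 < p" unfolding p_def by simp
    show "col x < n" for x using colp by blast
    show "sg x" if "x (col x) \<le> 1" for x
    proof -
      have "int k * int (x (col x)) \<le> int k * 1" using that by (intro mult_left_mono) auto
      then show ?thesis
        unfolding sg_def using Ap[of x] colp[of x]
        by (intro bexI[of _ "\<phi> x"]) (auto simp: \<phi>_def)
    qed
    show "\<not> sg x" if "p \<le> x (col x) + 1" for x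
    proof
      assume "sg x"
      then obtain y where y: "y \<in> A x" "y (col x) \<le> int k" unfolding sg_def by blast
      define i where "i = col x"
      have i: "i < n" "Suc i \<in> {1..n}" using colp[of x] unfolding i_def by auto
      have "real_of_int (supdist n y (\<phi> x)) \<le> Cf (Suc i)"
        using Cf[OF i(2)] Ap[of x] y(1) unfolding i_def by blast
      then have d: "real_of_int \<bar>y i - \<phi> x i\<bar> \<le> C"
        using supdist_ge[OF i(1), of y "\<phi> x"] CfC[OF i(2)]
        by (metis (no_types, opaque_lifting) of_int_le_iff order_trans)
      have xi: "int p \<le> int (x i) + 1" using that unfolding i_def by simp
      have phi: "\<phi> x i = int k * int (x i)" using i unfolding \<phi>_def by simp
      have "int k * (int p - 2) \<le> int k * int (x i) - int k"
      proof -
        have "int k * (int p - 2) \<le> int k * (int (x i) - 1)"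
          using xi by (intro mult_left_mono) auto
        then show ?thesis by (simp add: algebra_simps)
      qed
      also have "\<dots> \<le> \<phi> x i - y i" using phi y(2) unfolding i_def by simp
      finally have e1: "int k * (int p - 2) \<le> \<bar>y i - \<phi> x i\<bar>" by simp
      have e2: "int p - 2 \<le> int k * (int p - 2)"
      proof -
        have "1 * (int p - 2) \<le> int k * (int p - 2)"
          using \<open>k \<ge> 1\<close> unfolding p_def by (intro mult_right_mono) auto
        then show ?thesis by simp
      qed
      have "C < real_of_int (int p - 2)" unfolding p_def using Cpos
        by simp linarith
      also have "\<dots> \<le> real_of_int \<bar>y i - \<phi> x i\<bar>" using e1 e2 by simp
      finally show False using d by simp
    qed
    show "sg x = sg y" if "\<forall>j<n. x j \<le> y j + 1 \<and> y j \<le> x j + 1" "col x = col y" for x y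
    proof -
      define i where "i = col x"
      have i: "i < n" "Suc i \<in> {1..n}" using colp[of x] unfolding i_def by auto
      have "supdist n (\<phi> x) (\<phi> y) \<le> int k"
      proof (rule supdist_le)
        show "\<forall>j<n. \<bar>\<phi> x j - \<phi> y j\<bar> \<le> int k"
        proof (intro allI impI)
          fix j assume j: "j < n"
          have "\<bar>int (x j) - int (y j)\<bar> \<le> 1" using that(1) j by auto
          then have "int k * \<bar>int (x j) - int (y j)\<bar> \<le> int k * 1"
            by (intro mult_left_mono) auto
          then show "\<bar>\<phi> x j - \<phi> y j\<bar> \<le> int k"
            using j unfolding \<phi>_def by (simp add: abs_mult right_diff_distrib[symmetric])
        qed
      qed simp
      moreover have "A x = A y"
      proof (rule ccontr)
        assume ne: "A x \<noteq> A y"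
        have "A x \<in> V (Suc i)" "A y \<in> V (Suc i)" using Ap[of x] Ap[of y] that(2)
          unfolding i_def by auto
        then have "supdist n (\<phi> x) (\<phi> y) \<ge> 2 * int k"
          using rd[OF i(2)] ne Ap[of x] Ap[of y] unfolding r_disjoint_def by blast
        then show False using calculation \<open>k \<ge> 1\<close> by simp
      qed
      ultimately show ?thesis unfolding sg_def using that(2) by simp
    qed
  qed
qed

end
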